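(* For all $h\ge1$ and $i_1,\dots,i_h,j_1,\dots,j_h\in\{1,\dots,n\}$, $\mathcal K\big([i_1,\dots,i_h|j_1,\dots,j_h]^*\big)=(i_1|j_1)(i_2|j_2)\cdots(i_h|j_h)\in\mathbb{C}[M_{n,n}]$.
   Context: $\mathbb{C}[M_{n,n}]$ is the polynomial algebra in commuting indeterminates $(i|j)$, $1\le i,j\le n$. $D^l_{ij}$ is the derivation of $\mathbb{C}[M_{n,n}]$ with $D^l_{ij}((h|k))=\delta_{jh}(i|k)$. Let $\rho_{ij}(\mathbf p)=D^l_{ij}(\mathbf p)+(i|j)\mathbf p$; the map $e_{ij}\mapsto\rho_{ij}$ extends to an algebra morphism $\tau:\mathbf{U}(gl(n))\to\mathrm{End}_{\mathbb C}(\mathbb{C}[M_{n,n}])$. The Koszul map is the linear map $\mathcal K:\mathbf{U}(gl(n))\to\mathbb{C}[M_{n,n}]$, $\mathcal K(\mathbf P)=\tau(\mathbf P)(1)$. Virtual variables: $A_0=\{\alpha_1,\dots,\alpha_{m_0}\}$ (parity $0$), $A_1=\{\beta_1,\dots,\beta_{m_1}\}$ (parity $1$), $L=\{1,\dots,n\}$ (parity $1$), $m_0,m_1$ large; $gl(m_0|m_1+n)$ has homogeneous basis $e_{a,b}$ of parity $|a|+|b|$ and superbracket $[e_{a,b},e_{c,d}]=\delta_{bc}e_{a,d}-(-1)^{(|a|+|b|)(|c|+|d|)}\delta_{ad}e_{c,b}$, with $\mathbf{U}(gl(n))\subset\mathbf{U}(gl(m_0|m_1+n))$. A product $e_{a_m,b_m}\cdots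 e_{a_1,b_1}$ is irregular if for some $i\le m$ and virtual $\gamma$, $\#\{j\le i:b_j=\gamma\}>\#\{j<i:a_j=\gamma\}$; $\mathbf{Irr}$ is the left ideal they generate; it is known $Virt=\mathbf{U}(gl(n))\oplus\mathbf{Irr}$ is a subalgebra with $\mathbf{Irr}$ a two-sided ideal, and $\mathfrak p$ is the projection $Virt\to\mathbf{U}(gl(n))$ with kernel $\mathbf{Irr}$. The column Capelli *-bitableau is $[i_1,\dots,i_h|j_1,\dots,j_h]^*=\mathfrak p(e_{i_1\beta_1}\cdots e_{i_h\beta_h}e_{\beta_1j_1}\cdots e_{\beta_hj_h})$ with distinct negative virtual $\beta_1,\dots,\beta_h$. *)

theory Defs
  imports Complex_Main "HOL-Library.Poly_Mapping"
begin

text \<open>Polynomials in commuting indeterminates (i|j), represented as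
  finitely supported maps from monomials (exponent maps on index pairs) to
  complex coefficients; multiplication is the convolution product of
  Poly_Mapping.\<close>

type_synonym cpoly = "((nat \<times> nat) \<Rightarrow>\<^sub>0 nat) \<Rightarrow>\<^sub>0 complex"

definition var :: "nat \<Rightarrow> nat \<Rightarrow> cpoly" where
  "var i j = Poly_Mapping.single (Poly_Mapping.single (i, j) 1) 1"

definition const :: "complex \<Rightarrow> cpoly" where
  "const c = Poly_Mapping.single 0 c"

text \<open>The derivation D^l_{ij}, i.e. sum over k of (i|k) times the partial
  derivative with respect to (j|k), defined on monomials and extended linearly.\<close>

definition Dl :: "nat \<Rightarrow> nat \<Rightarrow> nat \<Rightarrow> cpoly \<Rightarrow> cpoly" where
  "Dl n i j p =
     (\<Sum>m\<in>Poly_Mapping.keys p. \<Sum>k\<in>{1..n}.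
        Poly_Mapping.single
          (m - Poly_Mapping.single (j, k) 1 + Poly_Mapping.single (i, k) 1)
          (Poly_Mapping.lookup p m * of_nat (Poly_Mapping.lookup m (j, k))))"

definition rho :: "nat \<Rightarrow> nat \<Rightarrow> nat \<Rightarrow> cpoly \<Rightarrow> cpoly" where
  "rho n i j p = Dl n i j p + var i j * p"

text \<open>Pos k = positive virtual alpha_k (parity 0), Neg k = negative virtual
  beta_k (parity 1), Prop i = proper symbol i (parity 1).\<close>

datatype letter = Pos nat | Neg nat | Prop nat

fun parity :: "letter \<Rightarrow> nat" where
  "parity (Pos _) = 0" | "parity (Neg _) = 1" | "parity (Prop _) = 1"

fun virtual :: "letter \<Rightarrow> bool" where
  "virtual (Prop _) = False" | "virtual _ = True"

definition valid_letter :: "nat \<Rightarrow> letter \<Rightarrow> bool" where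
  "valid_letter n a = (case a of Prop i \<Rightarrow> 1 \<le> i \<and> i \<le> n | _ \<Rightarrow> True)"

fun prop_index :: "letter \<Rightarrow> nat" where
  "prop_index (Prop i) = i" | "prop_index _ = 0"

text \<open>A word [(a_m,b_m), ..., (a_1,b_1)] (head = leftmost factor) stands for
  the monomial e_{a_m,b_m} ... e_{a_1,b_1}.\<close>

type_synonym gen = "letter \<times> letter"
type_synonym word = "gen list"
type_synonym free = "word \<Rightarrow> complex"

definition wmono :: "word \<Rightarrow> free" where
  "wmono w = (\<lambda>v. if v = w then 1 else 0)"

definition valid_word :: "nat \<Rightarrow> word \<Rightarrow> bool" where
  "valid_word n w = (\<forall>(a, b)\<in>set w. valid_letter n a \<and> valid_letter n b)"

inductive_set lin_span :: "free set \<Rightarrow> free set" for G where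
  zero: "(\<lambda>_. 0) \<in> lin_span G"
| step: "g \<in> G \<Longrightarrow> x \<in> lin_span G \<Longrightarrow> (\<lambda>w. c * g w + x w) \<in> lin_span G"

text \<open>Two-sided ideal defining U(gl(m0|m1+n)): spanned by
  u (e1 e2 - (-1)^{|e1||e2|} e2 e1 - [e1,e2]) v.\<close>

definition super_rel :: "word \<Rightarrow> gen \<Rightarrow> gen \<Rightarrow> word \<Rightarrow> free" where
  "super_rel u g1 g2 v =
    (let (a, b) = g1; (c, d) = g2;
         s = (-1::complex) ^ ((parity a + parity b) * (parity c + parity d))
     in (\<lambda>w. wmono (u @ [g1, g2] @ v) w - s * wmono (u @ [g2, g1] @ v) w
            - ((if b = c then wmono (u @ [(a, d)] @ v) w else 0)
               - s * (if a = d then wmono (u @ [(c, b)] @ v) w else 0))))"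

definition rel_gens :: "nat \<Rightarrow> free set" where
  "rel_gens n = {super_rel u g1 g2 v | u g1 g2 v.
      valid_word n u \<and> valid_word n [g1, g2] \<and> valid_word n v}"

text \<open>Irregular monomials: for the product e_{a_m,b_m} ... e_{a_1,b_1}
  (list w, so rev w ! (j-1) = (a_j, b_j)), there exist i and a virtual gamma
  with #{j \<le> i. b_j = gamma} > #{j < i. a_j = gamma}.\<close>

definition irregular :: "word \<Rightarrow> bool" where
  "irregular w = (let r = rev w in
     \<exists>i < length r. \<exists>\<gamma>. virtual \<gamma> \<and>
        card {j. j \<le> i \<and> snd (r ! j) = \<gamma>} > card {j. j < i \<and> fst (r ! j) = \<gamma>})"

definition irr_gens :: "nat \<Rightarrow> free set" where
  "irr_gens n = {wmono (u @ m) | u m. valid_word n u \<and> valid_word n m \<and> irregular m}"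

text \<open>Congruence modulo Irr in U(gl(m0|m1+n)): difference lies in I + Irr.\<close>

definition cong_Irr :: "nat \<Rightarrow> free \<Rightarrow> free \<Rightarrow> bool" where
  "cong_Irr n x y = ((\<lambda>w. x w - y w) \<in> lin_span (rel_gens n \<union> irr_gens n))"

text \<open>Elements of the free algebra on the generators of gl(n) (representatives
  of elements of U(gl(n))).\<close>

definition in_Ugln :: "nat \<Rightarrow> free \<Rightarrow> bool" where
  "in_Ugln n u = (finite {w. u w \<noteq> 0} \<and>
     (\<forall>w. u w \<noteq> 0 \<longrightarrow> (\<forall>(a, b)\<in>set w. \<exists>i j. a = Prop i \<and> b = Prop j
                              \<and> 1 \<le> i \<and> i \<le> n \<and> 1 \<le> j \<and> j \<le> n)))"

definition K_word :: "nat \<Rightarrow> word \<Rightarrow> cpoly" where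
  "K_word n w = foldr (\<lambda>(a, b) p. rho n (prop_index a) (prop_index b) p) w 1"

definition Koszul :: "nat \<Rightarrow> free \<Rightarrow> cpoly" where
  "Koszul n u = (\<Sum>w\<in>{w. u w \<noteq> 0}. const (u w) * K_word n w)"

definition capelli_word :: "nat list \<Rightarrow> nat list \<Rightarrow> nat list \<Rightarrow> word" where
  "capelli_word is js bs =
     map (\<lambda>(i, b). (Prop i, Neg b)) (zip is bs) @ map (\<lambda>(b, j). (Neg b, Prop j)) (zip bs js)"

end

theory Submission
  imports Defs
begin


type_synonym vvar = "letter \<times> nat"
type_synonym vword = "vvar list"
type_synonym vterm = "cpoly \<times> vword"

definition vpar :: "vvar \<Rightarrow> nat" where "vpar x = parity (fst x) + 1"
definition gp :: "letter \<Rightarrow> letter \<Rightarrow> nat" where "gp a b = parity a + parity b"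

fun Dw :: "letter \<Rightarrow> letter \<Rightarrow> vword \<Rightarrow> vterm list" where
  "Dw a b [] = []"
| "Dw a b (x # w) = (if fst x = b then [(1, (a, snd x) # w)] else []) @
     map (\<lambda>(c, q). ((-1) ^ (gp a b * vpar x) * c, x # q)) (Dw a b w)"

fun isProp :: "letter \<Rightarrow> bool" where "isProp (Prop _) = True" | "isProp _ = False"

definition Yw :: "letter \<Rightarrow> letter \<Rightarrow> vword \<Rightarrow> vterm list" where
  "Yw a b p = (if isProp b then [(1, (a, prop_index b) # p)] else [])"

definition Rstep :: "gen \<Rightarrow> vword \<Rightarrow> vterm list" where
  "Rstep g p = Dw (fst g) (snd g) p @ Yw (fst g) (snd g) p"

definition Lin :: "(vword \<Rightarrow> cpoly) \<Rightarrow> vterm list \<Rightarrow> cpoly" where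
  "Lin F T = sum_list (map (\<lambda>(c, q). c * F q) T)"

fun Psi :: "gen list \<Rightarrow> (vword \<Rightarrow> cpoly) \<Rightarrow> vword \<Rightarrow> cpoly" where
  "Psi [] F p = F p"
| "Psi (g # r) F p = Lin (Psi r F) (Rstep g p)"

fun pi :: "vword \<Rightarrow> cpoly" where
  "pi [] = 1"
| "pi ((Prop i, k) # p) = var i k * pi p"
| "pi ((Pos i, k) # p) = 0"
| "pi ((Neg i, k) # p) = 0"

definition Phi :: "word \<Rightarrow> cpoly" where "Phi w = Psi (rev w) pi []"

lemma Lin_Nil[simp]: "Lin F [] = 0" by (simp add: Lin_def)
lemma Lin_Cons[simp]: "Lin F (t # T) = fst t * F (snd t) + Lin F T"
  by (cases t) (simp add: Lin_def)
lemma Lin_append[simp]: "Lin F (T1 @ T2) = Lin F T1 + Lin F T2"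
  by (simp add: Lin_def)
lemma Lin_map_cons: "Lin F (map (\<lambda>(c, q). (s * c, x # q)) T) = s * Lin (\<lambda>q. F (x # q)) T"
  by (induct T) (auto simp: algebra_simps)
lemma Lin_add: "Lin (\<lambda>q. F q + G q) T = Lin F T + Lin G T"
  by (induct T) (auto simp: algebra_simps)
lemma Lin_smult: "Lin (\<lambda>q. C * F q) T = C * Lin F T"
  by (induct T) (auto simp: algebra_simps)
lemma Lin_diff: "Lin (\<lambda>q. F q - G q) T = Lin F T - Lin G T"
  by (induct T) (auto simp: algebra_simps)
lemma Lin_zero: "Lin (\<lambda>q. 0) T = 0"
  by (induct T) auto
lemma Lin_cong: "(\<And>c q. (c, q) \<in> set T \<Longrightarrow> F q = G q) \<Longrightarrow> Lin F T = Lin G T"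
  by (induct T) force+
lemma Lin_if: "Lin (\<lambda>q. if P then F q else 0) T = (if P then Lin F T else 0)"
  by (induct T) auto

lemma Dw_Lin_cons: "Lin F (Dw a b (x # w)) = (if fst x = b then F ((a, snd x) # w) else 0)
   + (-1) ^ (gp a b * vpar x) * Lin (\<lambda>q. F (x # q)) (Dw a b w)"
  by (simp add: Lin_map_cons)

lemma Psi_append: "Psi (r1 @ r2) F = Psi r1 (Psi r2 F)"
  by (induct r1) (auto intro!: ext)
lemma Psi_add: "Psi r (\<lambda>p. F p + G p) = (\<lambda>p. Psi r F p + Psi r G p)"
  by (induct r) (auto intro!: ext simp: Lin_add)
lemma Psi_smult: "Psi r (\<lambda>p. C * F p) = (\<lambda>p. C * Psi r F p)"
  by (induct r) (auto intro!: ext simp: Lin_smult)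
lemma Psi_zero: "Psi r (\<lambda>p. 0) = (\<lambda>p. 0)"
  by (induct r) (auto intro!: ext simp: Lin_zero)

lemma neg1_eq: "even (m + n) \<Longrightarrow> (-1::'a::ring_1) ^ m = (-1) ^ n"
  by (metis even_add neg_one_even_power neg_one_odd_power)

lemma neg1_3: "even (m + n + k) \<Longrightarrow> (-1::'a::ring_1) ^ m * (-1) ^ n = (-1) ^ k"
  by (metis neg1_eq power_add)

lemma neg1_mult: "(-1::'a::ring_1) ^ m * (-1) ^ n = (-1) ^ (m + n)"
  by (simp add: power_add)

lemma sgn1: "(-1::'a::ring_1)^(gp a b * vpar (c,k)) = (-1)^(gp a b * gp c d) * (-1)^(gp a b * vpar (d,k))"
proof -
  have "gp a b * vpar (c,k) + (gp a b * gp c d + gp a b * vpar (d,k))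
     = 2 * ((parity a + parity b) * (parity c + parity d + 1))"
    unfolding gp_def vpar_def by (simp add: algebra_simps)
  then show ?thesis by (simp add: neg1_mult neg1_eq)
qed

lemma sgn2: "(-1::'a::ring_1)^(gp c d * vpar (b,k)) = (-1)^(gp a b * gp c d) * (-1)^(gp c d * vpar (a,k))"
proof -
  have "gp c d * vpar (b,k) + (gp a b * gp c d + gp c d * vpar (a,k))
     = 2 * ((parity c + parity d) * (parity a + parity b + 1))"
    unfolding gp_def vpar_def by (simp add: algebra_simps)
  then show ?thesis by (simp add: neg1_mult neg1_eq)
qed

lemma sgn3: "(-1::'a::ring_1)^(gp b d * v) * (-1)^(gp a b * v) = (-1)^(gp a d * v)"
proof -
  have "gp b d * v + gp a b * v + gp a d * v
     = 2 * ((parity a + parity b + parity d) * v)"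
    unfolding gp_def by (simp add: algebra_simps)
  then show ?thesis by (simp add: neg1_mult neg1_eq)
qed

lemma gp_same1[simp]: "(-1::'a::ring_1)^(v * gp c c) = 1"
  unfolding gp_def by (simp add: mult_2_right[symmetric] algebra_simps)
lemma gp_same2[simp]: "(-1::'a::ring_1)^(gp c c * v) = 1"
  unfolding gp_def by (simp add: mult_2_right[symmetric] algebra_simps)

lemma fold_s: "s = (-1::cpoly)^n \<Longrightarrow> (-1::cpoly)^n = s" by simp

lemma DD:
 "Lin (\<lambda>q. Lin F (Dw a b q)) (Dw c d p) - (-1)^(gp a b * gp c d) * Lin (\<lambda>q. Lin F (Dw c d q)) (Dw a b p)
  = (if b = c then Lin F (Dw a d p) else 0) - (-1)^(gp a b * gp c d) * (if a = d then Lin F (Dw c b p) else 0)"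
proof (induct p arbitrary: F)
  case Nil show ?case by simp
next
  case (Cons x w)
  obtain e k where x: "x = (e,k)" by force
  note IH = Cons[of "\<lambda>q. F (x # q)"]
  have s1: "(-1::cpoly)^(gp a b * vpar (c,k)) = (-1)^(gp a b * gp c d) * (-1)^(gp a b * vpar (d,k))"
    by (rule sgn1)
  have s2: "(-1::cpoly)^(gp c d * vpar (b,k)) = (-1)^(gp a b * gp c d) * (-1)^(gp c d * vpar (a,k))"
    by (rule sgn2)
  have s3: "b = c \<Longrightarrow> (-1::cpoly)^(gp c d * vpar x) * (-1)^(gp a b * vpar x) = (-1)^(gp a d * vpar x)"
    using sgn3[of b d "vpar x" a] by simp
  have s4: "a = d \<Longrightarrow> (-1::cpoly)^(gp a b * vpar x) * (-1)^(gp c d * vpar x) = (-1)^(gp c b * vpar x)"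
    using sgn3[of a b "vpar x" c] by simp
  define sab where "sab = (-1::cpoly)^(gp a b * vpar x)"
  define scd where "scd = (-1::cpoly)^(gp c d * vpar x)"
  define s where "s = (-1::cpoly)^(gp a b * gp c d)"
  define sc where "sc = (-1::cpoly)^(gp a b * vpar (c,k))"
  define sd where "sd = (-1::cpoly)^(gp c d * vpar (a,k))"
  define A1 where "A1 = Lin (\<lambda>q. F((a,k)#q)) (Dw c d w)"
  define C1 where "C1 = Lin (\<lambda>q. F((c,k)#q)) (Dw a b w)"
  define P where "P = Lin (\<lambda>q. Lin (\<lambda>q'. F(x#q')) (Dw a b q)) (Dw c d w)"
  define Q where "Q = Lin (\<lambda>q. Lin (\<lambda>q'. F(x#q')) (Dw c d q)) (Dw a b w)"
  define Xad where "Xad = Lin (\<lambda>q. F(x#q)) (Dw a d w)"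
  define Xcb where "Xcb = Lin (\<lambda>q. F(x#q)) (Dw c b w)"
  have E1: "Lin (\<lambda>q. Lin F (Dw a b q)) (Dw c d (x # w)) =
     (if e=d then ((if c=b then F((a,k)#w) else 0) + sc*C1) else 0)
     + scd * ((if e=b then A1 else 0) + sab * P)"
    unfolding sc_def A1_def C1_def P_def sab_def scd_def
    by (simp add: Lin_map_cons Lin_add Lin_smult Lin_if Lin_zero x)
  have E2: "Lin (\<lambda>q. Lin F (Dw c d q)) (Dw a b (x # w)) =
     (if e=b then ((if a=d then F((c,k)#w) else 0) + sd*A1) else 0)
     + sab * ((if e=d then C1 else 0) + scd * Q)"
    unfolding sd_def A1_def C1_def Q_def sab_def scd_def
    by (simp add: Lin_map_cons Lin_add Lin_smult Lin_if Lin_zero x)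
  have E3: "Lin F (Dw a d (x # w)) = (if e = d then F((a,k)#w) else 0) + (-1)^(gp a d * vpar x) * Xad"
    unfolding Xad_def by (simp add: Lin_map_cons x)
  have E4: "Lin F (Dw c b (x # w)) = (if e = b then F((c,k)#w) else 0) + (-1)^(gp c b * vpar x) * Xcb"
    unfolding Xcb_def by (simp add: Lin_map_cons x)
  have IH': "P - s * Q = (if b = c then Xad else 0) - s * (if a = d then Xcb else 0)"
    using IH unfolding P_def Q_def s_def Xad_def Xcb_def .
  have s1': "e = d \<Longrightarrow> sc = s * sab"
    using s1 unfolding s_def sab_def sc_def x by simp
  have s2': "e = b \<Longrightarrow> scd = s * sd"
    using s2 unfolding s_def scd_def sd_def x by simp
  have s3': "b = c \<Longrightarrow> scd * sab = (-1)^(gp a d * vpar x)"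
    using s3 unfolding scd_def sab_def by simp
  have s4': "a = d \<Longrightarrow> sab * scd = (-1)^(gp c b * vpar x)"
    using s4 unfolding scd_def sab_def by simp
  have mid: "scd * sab * P - s * sab * scd * Q = scd * sab * (P - s * Q)"
    by (simp add: algebra_simps)
  have L: "((if e=d then ((if c=b then F((a,k)#w) else 0) + sc*C1) else 0)
     + scd * ((if e=b then A1 else 0) + sab * P))
     - s * ((if e=b then ((if a=d then F((c,k)#w) else 0) + sd*A1) else 0)
     + sab * ((if e=d then C1 else 0) + scd * Q))
     = (if e=d \<and> c=b then F((a,k)#w) else 0) - s*(if e=b \<and> a=d then F((c,k)#w) else 0) + scd*sab*(P - s*Q)"
    by (cases "e=d"; cases "e=b") (simp_all add: s1' s2' algebra_simps)
  have s3'': "b = c \<Longrightarrow> sab * scd = (-1)^(gp a d * vpar x)" using s3' by (simp add: mult.commute)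
  have s4'': "a = d \<Longrightarrow> scd * sab = (-1)^(gp c b * vpar x)" using s4' by (simp add: mult.commute)
  show ?case
    unfolding E1 E2 E3 E4 fold_s[OF s_def] L IH'
    by (cases "b = c"; cases "a = d") (simp_all add: s3' s4' s3'' s4'' algebra_simps)
qed

definition swp :: "(vword \<Rightarrow> cpoly) \<Rightarrow> bool" where
  "swp G = (\<forall>p1 x y q. G (p1 @ x # y # q) = (-1)^(vpar x * vpar y) * G (p1 @ y # x # q))"

lemma swp_inst: "swp G \<Longrightarrow> G (p1 @ x # y # q) = (-1)^(vpar x * vpar y) * G (p1 @ y # x # q)"
  unfolding swp_def by blast

lemma swp_cons: assumes "swp G" shows "swp (\<lambda>q. G (z # q))"
  unfolding swp_def
proof (intro allI)
  fix p1 x y q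
  from assms have "G ((z#p1) @ x#y#q) = (-1)^(vpar x*vpar y) * G ((z#p1)@y#x#q)" by (rule swp_inst)
  then show "G (z # p1 @ x # y # q) = (-1)^(vpar x*vpar y) * G (z # p1 @ y # x # q)" by simp
qed

lemma sgn4: "(-1::'a::ring_1)^(vpar (a,k) * v) = (-1)^(vpar (b,k') * v) * (-1)^(gp a b * v)"
proof -
  have "vpar (a,k) * v + (vpar (b,k') * v + gp a b * v) = 2 * ((parity a + parity b + 1) * v)"
    unfolding gp_def vpar_def by (simp add: algebra_simps)
  then show ?thesis by (simp add: neg1_mult neg1_eq)
qed

lemma swapD: "swp G \<Longrightarrow> Lin G (Dw a b (p1 @ x # y # q)) = (-1)^(vpar x * vpar y) * Lin G (Dw a b (p1 @ y # x # q))"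
proof (induct p1 arbitrary: G)
  case Nil
  obtain ex kx where x: "x = (ex, kx)" by force
  obtain ey ky where y: "y = (ey, ky)" by force
  have sw: "\<And>p1 x y q. G (p1 @ x # y # q) = (-1)^(vpar x * vpar y) * G (p1 @ y # x # q)"
    using Nil unfolding swp_def by blast
  have h1: "G ((a,kx)#y#q) = (-1)^(vpar (a,kx) * vpar y) * G (y#(a,kx)#q)"
    using sw[of "[]" "(a,kx)" y q] by simp
  have h2: "G (x#(a,ky)#q) = (-1)^(vpar x * vpar (a,ky)) * G ((a,ky)#x#q)"
    using sw[of "[]" x "(a,ky)" q] by simp
  have h3: "Lin (\<lambda>q. G (x # y # q)) (Dw a b q) = (-1)^(vpar x * vpar y) * Lin (\<lambda>q. G (y # x # q)) (Dw a b q)"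
  proof -
    have "Lin (\<lambda>q. G (x # y # q)) (Dw a b q) = Lin (\<lambda>q. (-1)^(vpar x * vpar y) * G (y # x # q)) (Dw a b q)"
      by (rule Lin_cong) (use sw[of "[]" x y] in simp)
    then show ?thesis by (simp add: Lin_smult)
  qed
  have g1: "ex = b \<Longrightarrow> (-1::cpoly)^(vpar (a,kx) * vpar y) = (-1)^(vpar x * vpar y) * (-1)^(gp a b * vpar y)"
    using sgn4[of a kx "vpar y" b kx] unfolding x by simp
  have g2: "ey = b \<Longrightarrow> (-1::cpoly)^(gp a b * vpar x) * (-1)^(vpar x * vpar (a,ky)) = (-1)^(vpar x * vpar y)"
  proof -
    assume "ey = b"
    have "gp a b * vpar x + vpar x * vpar (a,ky) + vpar x * vpar y = 2 * (vpar x * (parity a + parity b + 1))"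
      unfolding y \<open>ey = b\<close> gp_def vpar_def by (simp add: algebra_simps)
    then show ?thesis by (intro neg1_3) simp
  qed
  define sx where "sx = (-1::cpoly)^(gp a b * vpar x)"
  define sy where "sy = (-1::cpoly)^(gp a b * vpar y)"
  define sxy where "sxy = (-1::cpoly)^(vpar x * vpar y)"
  define Gx where "Gx = G ((a,kx)#y#q)"
  define Gx' where "Gx' = G (y#(a,kx)#q)"
  define Gy where "Gy = G (x#(a,ky)#q)"
  define Gy' where "Gy' = G ((a,ky)#x#q)"
  define L1 where "L1 = Lin (\<lambda>q. G (x # y # q)) (Dw a b q)"
  define L2 where "L2 = Lin (\<lambda>q. G (y # x # q)) (Dw a b q)"
  have eL: "Lin G (Dw a b ([] @ x # y # q)) = (if ex = b then Gx else 0) + sx * ((if ey = b then Gy else 0) + sy * L1)"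
    unfolding append_Nil Dw_Lin_cons sx_def sy_def Gx_def Gy_def L1_def x y by simp
  have eR: "Lin G (Dw a b ([] @ y # x # q)) = (if ey = b then Gy' else 0) + sy * ((if ex = b then Gx' else 0) + sx * L2)"
    unfolding append_Nil Dw_Lin_cons sx_def sy_def Gx'_def Gy'_def L2_def x y by simp
  have h1': "ex = b \<Longrightarrow> Gx = sxy * sy * Gx'"
    using h1 g1 unfolding Gx_def Gx'_def sxy_def sy_def by simp
  have h2': "ey = b \<Longrightarrow> sx * Gy = sxy * Gy'"
  proof -
    assume "ey = b"
    then have "sx * Gy = ((-1::cpoly)^(gp a b * vpar x) * (-1)^(vpar x * vpar (a,ky))) * Gy'"
      using h2 unfolding sx_def Gy_def Gy'_def by simp
    then show ?thesis using g2 \<open>ey = b\<close> unfolding sxy_def by simp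
  qed
  have h2'': "ey = b \<Longrightarrow> Gy * sx = Gy' * sxy" using h2' by (simp add: mult.commute)
  have h3': "L1 = sxy * L2" using h3 unfolding L1_def L2_def sxy_def .
  show ?case unfolding eL eR sxy_def[symmetric]
    by (cases "ex = b"; cases "ey = b") (simp_all add: h1' h2' h2'' h3' algebra_simps)
next
  case (Cons z p1)
  have "Lin (\<lambda>q. G (z # q)) (Dw a b (p1 @ x # y # q)) = (-1)^(vpar x * vpar y) * Lin (\<lambda>q. G (z # q)) (Dw a b (p1 @ y # x # q))"
    using Cons swp_cons by blast
  moreover have "G ((a, snd z) # p1 @ x # y # q) = (-1)^(vpar x * vpar y) * G ((a, snd z) # p1 @ y # x # q)"
    using swp_inst[OF Cons(2), of "(a, snd z) # p1" x y q] by simp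
  ultimately show ?case unfolding append_Cons Dw_Lin_cons by (simp add: algebra_simps)
qed

lemma pi_eq: "pi p = (if \<forall>z\<in>set p. isProp (fst z) then prod_list (map (\<lambda>z. var (prop_index (fst z)) (snd z)) p) else 0)"
  by (induct p rule: pi.induct) auto

lemma isProp_par: "isProp l \<Longrightarrow> parity l = 1"
  by (cases l) auto

lemma swp_pi: "swp pi"
  unfolding swp_def
proof (intro allI)
  fix p1 x y q
  show "pi (p1 @ x # y # q) = (-1)^(vpar x * vpar y) * pi (p1 @ y # x # q)"
  proof (cases "isProp (fst x) \<and> isProp (fst y)")
    case True
    then have "vpar x = 2" "vpar y = 2" by (auto simp: vpar_def isProp_par)
    then show ?thesis using True by (simp add: pi_eq algebra_simps)
  next
    case False
    then show ?thesis by (auto simp: pi_eq)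
  qed
qed


lemma LinY: "Lin G (Yw a b P) = (if isProp b then G ((a, prop_index b) # P) else 0)"
  by (simp add: Yw_def)

lemma LinR: "Lin G (Rstep g P) = Lin G (Dw (fst g) (snd g) P) + Lin G (Yw (fst g) (snd g) P)"
  by (simp add: Rstep_def)

lemma Psi_swp: "swp F \<Longrightarrow> swp (Psi r F)"
proof (induct r)
  case Nil
  have "Psi [] F = F" by (rule ext) simp
  then show ?case using Nil by simp
next
  case (Cons g r)
  then have IH: "swp (Psi r F)" by blast
  show ?case unfolding swp_def
  proof (intro allI)
    fix p1 x y q
    have "Lin (Psi r F) (Dw (fst g) (snd g) (p1 @ x # y # q)) = (-1)^(vpar x * vpar y) * Lin (Psi r F) (Dw (fst g) (snd g) (p1 @ y # x # q))"
      by (rule swapD[OF IH])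
    moreover have "Lin (Psi r F) (Yw (fst g) (snd g) (p1 @ x # y # q)) = (-1)^(vpar x * vpar y) * Lin (Psi r F) (Yw (fst g) (snd g) (p1 @ y # x # q))"
      using swp_inst[OF IH, of "(fst g, prop_index (snd g)) # p1" x y q] by (simp add: LinY)
    ultimately show "Psi (g # r) F (p1 @ x # y # q) = (-1)^(vpar x * vpar y) * Psi (g # r) F (p1 @ y # x # q)"
      by (simp add: LinR algebra_simps)
  qed
qed



lemma Rel:
  assumes sw: "swp F"
  shows "Lin (\<lambda>q. Lin F (Rstep (a,b) q)) (Rstep (c,d) p) - (-1)^(gp a b * gp c d) * Lin (\<lambda>q. Lin F (Rstep (c,d) q)) (Rstep (a,b) p)
   = (if b = c then Lin F (Rstep (a,d) p) else 0) - (-1)^(gp a b * gp c d) * (if a = d then Lin F (Rstep (c,b) p) else 0)"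
proof -
  define s where "s = (-1::cpoly)^(gp a b * gp c d)"
  define b' where "b' = prop_index b"
  define d' where "d' = prop_index d"
  define DD1 where "DD1 = Lin (\<lambda>q. Lin F (Dw a b q)) (Dw c d p)"
  define DD2 where "DD2 = Lin (\<lambda>q. Lin F (Dw c d q)) (Dw a b p)"
  define DAD where "DAD = Lin F (Dw a d p)"
  define DCB where "DCB = Lin F (Dw c b p)"
  define YD1 where "YD1 = Lin (\<lambda>q. F((a,b')#q)) (Dw c d p)"
  define YD2 where "YD2 = Lin (\<lambda>q. F((c,d')#q)) (Dw a b p)"
  define Fa where "Fa = F((a,d')#p)"
  define Fc where "Fc = F((c,b')#p)"
  define YY1 where "YY1 = F((a,b')#(c,d')#p)"
  define YY2 where "YY2 = F((c,d')#(a,b')#p)"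
  define sgA where "sgA = (-1::cpoly)^(gp a b * vpar (c,d'))"
  define sgB where "sgB = (-1::cpoly)^(gp c d * vpar (a,b'))"
  have e1: "Lin (\<lambda>q. Lin F (Rstep (a,b) q)) (Rstep (c,d) p) = DD1 + (if isProp b then YD1 else 0)
     + (if isProp d then ((if c = b then Fa else 0) + sgA * YD2 + (if isProp b then YY1 else 0)) else 0)"
    unfolding DD1_def YD1_def YD2_def Fa_def YY1_def sgA_def b'_def d'_def
    by (simp add: LinR LinY Lin_add Lin_if Lin_map_cons)
  have e2: "Lin (\<lambda>q. Lin F (Rstep (c,d) q)) (Rstep (a,b) p) = DD2 + (if isProp d then YD2 else 0)
     + (if isProp b then ((if a = d then Fc else 0) + sgB * YD1 + (if isProp d then YY2 else 0)) else 0)"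
    unfolding DD2_def YD1_def YD2_def Fc_def YY2_def sgB_def b'_def d'_def
    by (simp add: LinR LinY Lin_add Lin_if Lin_map_cons)
  have e3: "Lin F (Rstep (a,d) p) = DAD + (if isProp d then Fa else 0)"
    unfolding DAD_def Fa_def d'_def by (simp add: LinR LinY)
  have e4: "Lin F (Rstep (c,b) p) = DCB + (if isProp b then Fc else 0)"
    unfolding DCB_def Fc_def b'_def by (simp add: LinR LinY)
  have dd: "DD1 - s * DD2 = (if b = c then DAD else 0) - s * (if a = d then DCB else 0)"
    unfolding DD1_def DD2_def DAD_def DCB_def s_def by (rule DD)
  have gA: "isProp d \<Longrightarrow> sgA = s"
    unfolding sgA_def s_def gp_def vpar_def by (simp add: isProp_par)
  have gB: "isProp b \<Longrightarrow> s * sgB = 1"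
  proof -
    assume "isProp b"
    then have "gp a b * gp c d + gp c d * vpar (a,b') = 2 * (gp c d * (parity a + 1))"
      unfolding gp_def vpar_def by (simp add: isProp_par algebra_simps)
    then show ?thesis unfolding s_def sgB_def by (simp add: neg1_mult neg1_eq)
  qed
  have gB': "isProp b \<Longrightarrow> sgB * s = 1" using gB by (simp add: mult.commute)
  have yy: "isProp b \<Longrightarrow> isProp d \<Longrightarrow> YY1 = s * YY2"
  proof -
    assume "isProp b" "isProp d"
    then have "vpar (a,b') * vpar (c,d') = gp a b * gp c d"
      unfolding gp_def vpar_def by (simp add: isProp_par)
    then show ?thesis using swp_inst[OF sw, of "[]" "(a,b')" "(c,d')" p]
      unfolding YY1_def YY2_def s_def by simp
  qed
  have main: "(DD1 + (if isProp b then YD1 else 0)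
     + (if isProp d then ((if c = b then Fa else 0) + sgA * YD2 + (if isProp b then YY1 else 0)) else 0))
     - s * (DD2 + (if isProp d then YD2 else 0)
     + (if isProp b then ((if a = d then Fc else 0) + sgB * YD1 + (if isProp d then YY2 else 0)) else 0))
     = (DD1 - s * DD2) + (if isProp d \<and> c = b then Fa else 0) - s * (if isProp b \<and> a = d then Fc else 0)"
    by (cases "isProp b"; cases "isProp d") (simp_all add: gA gB gB' yy algebra_simps)
  show ?thesis
    unfolding e1 e2 e3 e4 s_def[symmetric] main dd
    by (cases "b = c"; cases "a = d") (auto simp: algebra_simps)
qed



lemma mono_eq1:
  fixes D M J I :: "(nat \<times> nat) \<Rightarrow>\<^sub>0 nat"
  assumes "\<And>t. Poly_Mapping.lookup D t = 0 \<or> Poly_Mapping.lookup J t = 0"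
  shows "D + M - J + I = D + (M - J + I)"
proof (rule poly_mapping_eqI)
  fix t show "Poly_Mapping.lookup (D + M - J + I) t = Poly_Mapping.lookup (D + (M - J + I)) t"
    using assms[of t] by (auto simp: lookup_add lookup_minus)
qed

lemma pk:
  fixes M :: "(nat \<times> nat) \<Rightarrow>\<^sub>0 nat"
  shows "Poly_Mapping.single (Poly_Mapping.single ek 1 + M - Poly_Mapping.single jk 1 + Poly_Mapping.single ik 1)
      (of_nat (Poly_Mapping.lookup (Poly_Mapping.single ek 1 + M) jk) :: complex)
    = (if jk = ek then Poly_Mapping.single (Poly_Mapping.single ik 1 + M) 1 else 0)
      + Poly_Mapping.single (Poly_Mapping.single ek 1 + (M - Poly_Mapping.single jk 1 + Poly_Mapping.single ik 1))
          (of_nat (Poly_Mapping.lookup M jk))"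
proof (cases "jk = ek")
  case False
  have "Poly_Mapping.single ek 1 + M - Poly_Mapping.single jk 1 + Poly_Mapping.single ik 1
      = Poly_Mapping.single ek 1 + (M - Poly_Mapping.single jk 1 + Poly_Mapping.single ik 1)"
    by (rule mono_eq1) (use False in \<open>auto simp: lookup_single when_def\<close>)
  moreover have "Poly_Mapping.lookup (Poly_Mapping.single ek 1 + M) jk = Poly_Mapping.lookup M jk"
    using False by (simp add: lookup_add lookup_single when_def)
  ultimately show ?thesis using False by simp
next
  case True
  have m1: "Poly_Mapping.single ek 1 + M - Poly_Mapping.single jk 1 + Poly_Mapping.single ik 1
      = Poly_Mapping.single ik 1 + M"
    by (rule poly_mapping_eqI) (use True in \<open>auto simp: lookup_add lookup_minus lookup_single when_def\<close>)
  have lk: "Poly_Mapping.lookup (Poly_Mapping.single ek 1 + M) jk = Suc (Poly_Mapping.lookup M jk)"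
    using True by (simp add: lookup_add)
  show ?thesis
  proof (cases "Poly_Mapping.lookup M jk = 0")
    case True
    then show ?thesis using \<open>jk = ek\<close> m1 lk by simp
  next
    case False
    have m2: "Poly_Mapping.single ek 1 + (M - Poly_Mapping.single jk 1 + Poly_Mapping.single ik 1)
      = Poly_Mapping.single ik 1 + M"
      by (rule poly_mapping_eqI) (use True False in \<open>auto simp: lookup_add lookup_minus lookup_single when_def\<close>)
    show ?thesis using \<open>jk = ek\<close> m1 m2 lk
      by (simp add: single_add[symmetric] add.commute)
  qed
qed

lemma Dl_single: "Dl n i j (Poly_Mapping.single m 1) =
   (\<Sum>k\<in>{1..n}. Poly_Mapping.single (m - Poly_Mapping.single (j, k) 1 + Poly_Mapping.single (i, k) 1)
        (of_nat (Poly_Mapping.lookup m (j, k))))"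
  by (simp add: Dl_def)

lemma var_mult: "var e k * Poly_Mapping.single M 1 = Poly_Mapping.single (Poly_Mapping.single (e,k) 1 + M) 1"
  by (simp add: var_def mult_single)

lemma Dl_step:
  assumes "k0 \<in> {1..n}"
  shows "Dl n i j (Poly_Mapping.single (Poly_Mapping.single (e,k0) 1 + M) 1)
    = (if e = j then Poly_Mapping.single (Poly_Mapping.single (i,k0) 1 + M) 1 else 0)
      + var e k0 * Dl n i j (Poly_Mapping.single M 1)"
proof -
  have "Dl n i j (Poly_Mapping.single (Poly_Mapping.single (e,k0) 1 + M) 1)
     = (\<Sum>k\<in>{1..n}. (if (j,k) = (e,k0) then Poly_Mapping.single (Poly_Mapping.single (i,k) 1 + M) 1 else 0)
        + Poly_Mapping.single (Poly_Mapping.single (e,k0) 1 + (M - Poly_Mapping.single (j,k) 1 + Poly_Mapping.single (i,k) 1))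
          (of_nat (Poly_Mapping.lookup M (j,k))))"
    unfolding Dl_single by (rule sum.cong[OF refl]) (rule pk)
  also have "\<dots> = (\<Sum>k\<in>{1..n}. (if (j,k) = (e,k0) then Poly_Mapping.single (Poly_Mapping.single (i,k) 1 + M) 1 else 0))
      + (\<Sum>k\<in>{1..n}. Poly_Mapping.single (Poly_Mapping.single (e,k0) 1 + (M - Poly_Mapping.single (j,k) 1 + Poly_Mapping.single (i,k) 1))
          (of_nat (Poly_Mapping.lookup M (j,k))))"
    by (rule sum.distrib)
  also have "(\<Sum>k\<in>{1..n}. (if (j,k) = (e,k0) then Poly_Mapping.single (Poly_Mapping.single (i,k) 1 + M) 1 else 0))
     = (if e = j then Poly_Mapping.single (Poly_Mapping.single (i,k0) 1 + M) 1 else 0)"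
    using assms by (cases "e = j") (simp_all add: sum.delta')
  also have "(\<Sum>k\<in>{1..n}. Poly_Mapping.single (Poly_Mapping.single (e,k0) 1 + (M - Poly_Mapping.single (j,k) 1 + Poly_Mapping.single (i,k) 1))
          (of_nat (Poly_Mapping.lookup M (j,k))))
     = var e k0 * Dl n i j (Poly_Mapping.single M 1)"
    unfolding Dl_single sum_distrib_left var_def by (simp add: mult_single)
  finally show ?thesis .
qed


definition okp :: "nat \<Rightarrow> vword \<Rightarrow> bool" where
  "okp n p = (\<forall>z\<in>set p. isProp (fst z) \<and> snd z \<in> {1..n})"

definition mon :: "vword \<Rightarrow> (nat \<times> nat) \<Rightarrow>\<^sub>0 nat" where
  "mon p = sum_list (map (\<lambda>z. Poly_Mapping.single (prop_index (fst z), snd z) 1) p)"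

lemma pi_single: "okp n p \<Longrightarrow> pi p = Poly_Mapping.single (mon p) 1"
proof (induct p)
  case Nil then show ?case by (simp add: mon_def)
next
  case (Cons x w)
  obtain l k where x: "x = (l,k)" by force
  then obtain e where l: "l = Prop e" using Cons(2) by (cases l) (auto simp: okp_def)
  have "okp n w" using Cons(2) by (simp add: okp_def)
  then show ?case using Cons(1) unfolding x l by (simp add: var_mult mon_def)
qed

lemma Dl_alt:
  assumes "finite S" "Poly_Mapping.keys p \<subseteq> S"
  shows "Dl n i j p = (\<Sum>m\<in>S. \<Sum>k\<in>{1..n}.
        Poly_Mapping.single
          (m - Poly_Mapping.single (j, k) 1 + Poly_Mapping.single (i, k) 1)
          (Poly_Mapping.lookup p m * of_nat (Poly_Mapping.lookup m (j, k))))"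
  unfolding Dl_def
  by (rule sum.mono_neutral_left) (use assms in \<open>auto simp: in_keys_iff\<close>)

lemma Dl_add: "Dl n i j (p + q) = Dl n i j p + Dl n i j q"
proof -
  let ?S = "Poly_Mapping.keys p \<union> Poly_Mapping.keys q"
  have f: "finite ?S" by simp
  show ?thesis
  proof -
    have p: "Dl n i j p = (\<Sum>m\<in>?S. \<Sum>k\<in>{1..n}.
        Poly_Mapping.single (m - Poly_Mapping.single (j, k) 1 + Poly_Mapping.single (i, k) 1)
          (Poly_Mapping.lookup p m * of_nat (Poly_Mapping.lookup m (j, k))))"
      by (rule Dl_alt[OF f]) auto
    have q: "Dl n i j q = (\<Sum>m\<in>?S. \<Sum>k\<in>{1..n}.
        Poly_Mapping.single (m - Poly_Mapping.single (j, k) 1 + Poly_Mapping.single (i, k) 1)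
          (Poly_Mapping.lookup q m * of_nat (Poly_Mapping.lookup m (j, k))))"
      by (rule Dl_alt[OF f]) auto
    show ?thesis unfolding Dl_alt[OF f keys_add] p q
      by (simp add: lookup_add distrib_right single_add sum.distrib)
  qed
qed

lemma Dl_zero: "Dl n i j 0 = 0"
  by (simp add: Dl_def)

lemma rho_add: "rho n i j (p + q) = rho n i j p + rho n i j q"
  by (simp add: rho_def Dl_add algebra_simps)

lemma rho_zero: "rho n i j 0 = 0"
  by (simp add: rho_def Dl_zero)

definition Kr :: "nat \<Rightarrow> gen list \<Rightarrow> cpoly \<Rightarrow> cpoly" where
  "Kr n r x = foldl (\<lambda>x g. rho n (prop_index (fst g)) (prop_index (snd g)) x) x r"

lemma Kr_Nil[simp]: "Kr n [] x = x" by (simp add: Kr_def)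
lemma Kr_Cons[simp]: "Kr n (g # r) x = Kr n r (rho n (prop_index (fst g)) (prop_index (snd g)) x)"
  by (simp add: Kr_def)

lemma Kr_add: "Kr n r (x + y) = Kr n r x + Kr n r y"
  by (induct r arbitrary: x y) (simp_all add: rho_add)

lemma Kr_zero: "Kr n r 0 = 0"
  by (induct r) (simp_all add: rho_zero)

lemma Dw_set: "(c, q) \<in> set (Dw a b p) \<Longrightarrow> \<exists>p1 k p2. p = p1 @ (b,k) # p2 \<and> q = p1 @ (a,k) # p2"
proof (induct p arbitrary: c q)
  case Nil then show ?case by simp
next
  case (Cons x w)
  show ?case
  proof (cases "(c, q) \<in> set (map (\<lambda>(c, q). ((-1) ^ (gp a b * vpar x) * c, x # q)) (Dw a b w))")
    case True
    then obtain c' q' where "(c', q') \<in> set (Dw a b w)" "q = x # q'" by auto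
    then obtain p1 k p2 where "w = p1 @ (b,k) # p2" "q' = p1 @ (a,k) # p2" using Cons(1) by blast
    then show ?thesis using \<open>q = x # q'\<close> by (intro exI[of _ "x # p1"]) auto
  next
    case False
    then have "fst x = b" "q = (a, snd x) # w" using Cons(2) by (auto split: if_splits)
    then show ?thesis by (intro exI[of _ "[]"]) (cases x, auto)
  qed
qed

lemma neg1_2mult[simp]: "(-1::'a::ring_1)^(2 * v) = 1"
  by (simp add: power_mult)

lemma Dw_coeff: "even (gp a b) \<Longrightarrow> (c, q) \<in> set (Dw a b p) \<Longrightarrow> c = 1"
proof (induct p arbitrary: c q)
  case Nil then show ?case by simp
next
  case (Cons x w)
  from Cons(2) obtain t where t: "gp a b = 2 * t" by (auto elim: evenE)
  have "(-1::cpoly)^(gp a b * vpar x) = 1" unfolding t by (simp add: mult.assoc)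
  then show ?case using Cons by (auto split: if_splits)
qed

lemma Lin_pi_Dw: "okp n p \<Longrightarrow> Lin pi (Dw (Prop i) (Prop j) p) = Dl n i j (pi p)"
proof (induct p)
  case Nil
  show ?case by (simp add: Dl_single[of n i j 0, simplified])
next
  case (Cons x w)
  obtain l k0 where x: "x = (l,k0)" by force
  then obtain e where l: "l = Prop e" and k0: "k0 \<in> {1..n}" using Cons(2) by (cases l) (auto simp: okp_def)
  have w: "okp n w" using Cons(2) by (simp add: okp_def)
  have "Lin pi (Dw (Prop i) (Prop j) (x # w)) = (if e = j then pi ((Prop i, k0) # w) else 0)
      + var e k0 * Lin pi (Dw (Prop i) (Prop j) w)"
    unfolding Dw_Lin_cons unfolding x l by (simp add: gp_def Lin_smult)
  also have "\<dots> = Dl n i j (pi (x # w))"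
    unfolding Cons(1)[OF w] x l using Dl_step[OF k0, of i j e "mon w"] pi_single[OF w]
    by (simp add: var_mult)
  finally show ?case .
qed

definition okg :: "nat \<Rightarrow> gen \<Rightarrow> bool" where
  "okg n g = (\<exists>i j. g = (Prop i, Prop j) \<and> i \<in> {1..n} \<and> j \<in> {1..n})"

lemma LinK: "(\<forall>(c,q)\<in>set T. c = 1 \<and> okp n q) \<Longrightarrow> (\<forall>q. okp n q \<longrightarrow> G q = Kr n r (pi q))
   \<Longrightarrow> Lin G T = Kr n r (Lin pi T)"
  by (induct T) (auto simp: Kr_add Kr_zero)

lemma Psi_proper: "(\<forall>g\<in>set r. okg n g) \<Longrightarrow> okp n p \<Longrightarrow> Psi r pi p = Kr n r (pi p)"
proof (induct r arbitrary: p)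
  case Nil then show ?case by simp
next
  case (Cons g r)
  then obtain i j where g: "g = (Prop i, Prop j)" and ij: "i \<in> {1..n}" "j \<in> {1..n}"
    by (auto simp: okg_def)
  have T: "\<forall>(c,q)\<in>set (Rstep g p). c = 1 \<and> okp n q"
  proof (intro ballI, clarify)
    fix c q assume "(c, q) \<in> set (Rstep g p)"
    then consider "(c, q) \<in> set (Dw (Prop i) (Prop j) p)" | "c = 1" "q = (Prop i, j) # p"
      unfolding Rstep_def Yw_def g by auto
    then show "c = 1 \<and> okp n q"
    proof cases
      case 1
      have "c = 1" by (rule Dw_coeff[OF _ 1]) (simp add: gp_def)
      moreover obtain p1 k p2 where "p = p1 @ (Prop j,k) # p2" "q = p1 @ (Prop i,k) # p2"
        using Dw_set[OF 1] by blast
      ultimately show ?thesis using Cons(3) by (auto simp: okp_def)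
    next
      case 2 then show ?thesis using Cons(3) ij by (auto simp: okp_def)
    qed
  qed
  have IH: "\<forall>q. okp n q \<longrightarrow> Psi r pi q = Kr n r (pi q)" using Cons by auto
  have "Psi (g # r) pi p = Kr n r (Lin pi (Rstep g p))"
    using LinK[OF T IH] by simp
  also have "Lin pi (Rstep g p) = rho n i j (pi p)"
    unfolding LinR LinY g using Lin_pi_Dw[OF Cons(3)] by (simp add: rho_def)
  finally show ?case using g by simp
qed

lemma Phi_proper: "(\<forall>g\<in>set w. okg n g) \<Longrightarrow> Phi w = K_word n w"
  unfolding Phi_def K_word_def
  using Psi_proper[of "rev w" n "[]"]
  by (simp add: okp_def Kr_def foldr_conv_foldl case_prod_beta)



definition cnt :: "letter \<Rightarrow> vword \<Rightarrow> nat" where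
  "cnt \<gamma> p = length (filter (\<lambda>z. fst z = \<gamma>) p)"

lemma cnt_simps[simp]: "cnt \<gamma> [] = 0" "cnt \<gamma> (x # p) = (if fst x = \<gamma> then 1 else 0) + cnt \<gamma> p"
  "cnt \<gamma> (p @ q) = cnt \<gamma> p + cnt \<gamma> q"
  by (auto simp: cnt_def)

lemma Dw_cnt: "(c, q) \<in> set (Dw a b p) \<Longrightarrow>
   cnt \<gamma> q + (if b = \<gamma> then 1 else 0) = cnt \<gamma> p + (if a = \<gamma> then 1 else 0)"
  by (drule Dw_set) auto

lemma Dw_nob: "cnt b p = 0 \<Longrightarrow> Dw a b p = []"
  by (induct p) (auto split: if_splits)

lemma Dw_unique: "cnt b P1 = 0 \<Longrightarrow> cnt b P2 = 0 \<Longrightarrow> even (gp a b) \<Longrightarrow>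
   Dw a b (P1 @ (b,k) # P2) = [(1, P1 @ (a,k) # P2)]"
proof (induct P1)
  case Nil then show ?case by (simp add: Dw_nob)
next
  case (Cons x P1)
  from Cons(4) obtain t where t: "gp a b = 2 * t" by (auto elim: evenE)
  have "(-1::cpoly)^(gp a b * vpar x) = 1" unfolding t by (simp add: mult.assoc)
  then show ?case using Cons by (auto split: if_splits)
qed

lemma Lin_zero': "(\<And>c q. (c, q) \<in> set T \<Longrightarrow> F q = 0) \<Longrightarrow> Lin F T = 0"
  by (induct T) force+

definition irr_list :: "letter \<Rightarrow> gen list \<Rightarrow> nat \<Rightarrow> bool" where
  "irr_list \<gamma> r c = (\<exists>i < length r. length (filter (\<lambda>g. snd g = \<gamma>) (take (Suc i) r))
      > length (filter (\<lambda>g. fst g = \<gamma>) (take i r)) + c)"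

lemma virt_notProp: "virtual \<gamma> \<Longrightarrow> \<not> isProp \<gamma>"
  by (cases \<gamma>) auto

lemma Psi_irr: "virtual \<gamma> \<Longrightarrow> irr_list \<gamma> r (cnt \<gamma> p) \<Longrightarrow> Psi r G p = 0"
proof (induct r arbitrary: p)
  case Nil then show ?case by (simp add: irr_list_def)
next
  case (Cons g r)
  obtain a b where g: "g = (a, b)" by force
  from Cons(3) obtain i where i: "i < Suc (length r)"
    and ineq: "length (filter (\<lambda>g. snd g = \<gamma>) (take (Suc i) (g # r)))
      > length (filter (\<lambda>g. fst g = \<gamma>) (take i (g # r))) + cnt \<gamma> p"
    unfolding irr_list_def by auto
  show ?case
  proof (cases i)
    case 0
    then have "b = \<gamma>" "cnt \<gamma> p = 0" using ineq g by (auto split: if_splits)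
    then have "Rstep g p = []" using Cons(2) g
      by (simp add: Rstep_def Yw_def Dw_nob virt_notProp)
    then show ?thesis by simp
  next
    case (Suc i')
    have step: "\<And>c q. (c, q) \<in> set (Rstep g p) \<Longrightarrow>
        cnt \<gamma> q + (if b = \<gamma> then 1 else 0) = cnt \<gamma> p + (if a = \<gamma> then 1 else 0)"
    proof -
      fix c q assume "(c, q) \<in> set (Rstep g p)"
      then consider "(c, q) \<in> set (Dw a b p)" | "isProp b" "q = (a, prop_index b) # p"
        unfolding Rstep_def Yw_def g by (auto split: if_splits)
      then show "cnt \<gamma> q + (if b = \<gamma> then 1 else 0) = cnt \<gamma> p + (if a = \<gamma> then 1 else 0)"
      proof cases
        case 1 then show ?thesis by (rule Dw_cnt)
      next
        case 2
        then have "b \<noteq> \<gamma>" using virt_notProp[OF Cons(2)] by auto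
        then show ?thesis using 2 by simp
      qed
    qed
    show ?thesis
    proof (simp, rule Lin_zero')
      fix c q assume cq: "(c, q) \<in> set (Rstep g p)"
      have "irr_list \<gamma> r (cnt \<gamma> q)"
        unfolding irr_list_def
      proof (intro exI[of _ i'] conjI)
        show "i' < length r" using i Suc by simp
        show "length (filter (\<lambda>g. snd g = \<gamma>) (take (Suc i') r))
          > length (filter (\<lambda>g. fst g = \<gamma>) (take i' r)) + cnt \<gamma> q"
          using ineq step[OF cq] unfolding Suc g by (auto split: if_splits)
      qed
      then show "Psi r G q = 0" by (rule Cons(1)[OF Cons(2)])
    qed
  qed
qed

lemma card_filter: "t \<le> length xs \<Longrightarrow> card {j. j < t \<and> P (xs ! j)} = length (filter P (take t xs))"
proof (induct t)
  case 0 then show ?case by simp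
next
  case (Suc t)
  have e: "{j. j < Suc t \<and> P (xs ! j)} = {j. j < t \<and> P (xs ! j)} \<union> (if P (xs ! t) then {t} else {})"
    by (auto simp: less_Suc_eq)
  have "take (Suc t) xs = take t xs @ [xs ! t]" using Suc(2) by (simp add: take_Suc_conv_app_nth)
  then show ?case using Suc by (simp add: e card_insert_if)
qed

lemma irregular_irr: "irregular m \<Longrightarrow> \<exists>\<gamma>. virtual \<gamma> \<and> irr_list \<gamma> (rev m) 0"
proof -
  assume "irregular m"
  then obtain i \<gamma> where i: "i < length (rev m)" and v: "virtual \<gamma>"
    and c: "card {j. j \<le> i \<and> snd (rev m ! j) = \<gamma>} > card {j. j < i \<and> fst (rev m ! j) = \<gamma>}"
    unfolding irregular_def Let_def by blast
  have "{j. j \<le> i \<and> snd (rev m ! j) = \<gamma>} = {j. j < Suc i \<and> snd (rev m ! j) = \<gamma>}" by auto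
  then have "length (filter (\<lambda>g. snd g = \<gamma>) (take (Suc i) (rev m)))
      > length (filter (\<lambda>g. fst g = \<gamma>) (take i (rev m)))"
    using c i card_filter[of "Suc i" "rev m" "\<lambda>g. snd g = \<gamma>"] card_filter[of i "rev m" "\<lambda>g. fst g = \<gamma>"]
    by simp
  then show ?thesis using v i unfolding irr_list_def by auto
qed

lemma Phi_irr: "irregular m \<Longrightarrow> Phi (u @ m) = 0"
proof -
  assume "irregular m"
  then obtain \<gamma> where "virtual \<gamma>" "irr_list \<gamma> (rev m) 0" using irregular_irr by blast
  then have "Psi (rev m) (Psi (rev u) pi) [] = 0" using Psi_irr[of \<gamma> "rev m" "[]"] by simp
  then show ?thesis unfolding Phi_def by (simp add: Psi_append)
qed

lemma capB: "(\<forall>z\<in>set p. \<exists>b. fst z = Neg b) \<Longrightarrow>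
  Psi (rev (map (\<lambda>(b,j). (Neg b, Prop j)) ys)) G p = G (map (\<lambda>(b,j). (Neg b, j)) ys @ p)"
proof (induct ys arbitrary: p rule: rev_induct)
  case Nil then show ?case by simp
next
  case (snoc y ys)
  obtain b j where y: "y = (b, j)" by force
  have "cnt (Prop j) p = 0" using snoc(2) by (induct p) auto
  then have "Rstep (Neg b, Prop j) p = [(1, (Neg b, j) # p)]"
    by (simp add: Rstep_def Yw_def Dw_nob)
  moreover have "Psi (rev (map (\<lambda>(b,j). (Neg b, Prop j)) ys)) G ((Neg b, j) # p)
     = G (map (\<lambda>(b,j). (Neg b, j)) ys @ (Neg b, j) # p)"
    using snoc by auto
  ultimately show ?case using y by simp
qed

lemma capA: "distinct (map (\<lambda>(i,b,j). b) xs) \<Longrightarrow> (\<forall>z\<in>set pre. \<forall>b. fst z \<noteq> Neg b) \<Longrightarrow>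
  (\<forall>z\<in>set post. \<forall>b. fst z \<noteq> Neg b) \<Longrightarrow>
  Psi (rev (map (\<lambda>(i,b,j). (Prop i, Neg b)) xs)) G (pre @ map (\<lambda>(i,b,j). (Neg b, j)) xs @ post)
   = G (pre @ map (\<lambda>(i,b,j). (Prop i, j)) xs @ post)"
proof (induct xs arbitrary: post rule: rev_induct)
  case Nil then show ?case by simp
next
  case (snoc x xs)
  obtain i b j where x: "x = (i, b, j)" by (cases x) auto
  have c1: "cnt (Neg b) (pre @ map (\<lambda>(i,b,j). (Neg b, j)) xs) = 0"
    using snoc(2,3) x by (fastforce simp: cnt_def filter_empty_conv image_iff)
  have c2: "cnt (Neg b) post = 0" using snoc(4) by (auto simp: cnt_def filter_empty_conv)
  have "Rstep (Prop i, Neg b) (pre @ map (\<lambda>(i,b,j). (Neg b, j)) xs @ (Neg b, j) # post)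
     = [(1, pre @ map (\<lambda>(i,b,j). (Neg b, j)) xs @ (Prop i, j) # post)]"
    using Dw_unique[OF c1 c2, of "Prop i" j] by (simp add: Rstep_def Yw_def gp_def)
  moreover have "Psi (rev (map (\<lambda>(i,b,j). (Prop i, Neg b)) xs)) G (pre @ map (\<lambda>(i,b,j). (Neg b, j)) xs @ (Prop i, j) # post)
     = G (pre @ map (\<lambda>(i,b,j). (Prop i, j)) xs @ (Prop i, j) # post)"
    using snoc by auto
  ultimately show ?case using x by simp
qed



lemma Psi_Nil_fun[simp]: "Psi [] F = F" by (rule ext) simp

lemma Psi_single_fun[simp]: "Psi [g] F = (\<lambda>q. Lin F (Rstep g q))" by (rule ext) simp

lemma Psi_diff: "Psi r (\<lambda>p. F p - C * G p) = (\<lambda>p. Psi r F p - C * Psi r G p)"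
  by (induct r) (auto intro!: ext simp: Lin_diff Lin_smult)

lemma Phi_rel: "Phi (u @ [(a,b),(c,d)] @ v) - (-1)^(gp a b * gp c d) * Phi (u @ [(c,d),(a,b)] @ v)
   - ((if b = c then Phi (u @ [(a,d)] @ v) else 0)
      - (-1)^(gp a b * gp c d) * (if a = d then Phi (u @ [(c,b)] @ v) else 0)) = 0"
proof -
  define F where "F = Psi (rev u) pi"
  have sw: "swp F" unfolding F_def by (rule Psi_swp[OF swp_pi])
  define s where "s = (-1::cpoly)^(gp a b * gp c d)"
  define D1 where "D1 = (if b = c then 1 else (0::cpoly))"
  define D2 where "D2 = (if a = d then 1 else (0::cpoly))"
  have ph: "\<And>X. Phi (u @ X @ v) = Psi (rev v) (Psi (rev X) F) []"
    unfolding Phi_def F_def by (simp add: Psi_append)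
  define H1 where "H1 = Psi (rev [(a,b),(c,d)]) F"
  define H2 where "H2 = Psi (rev [(c,d),(a,b)]) F"
  define H3 where "H3 = Psi (rev [(a,d)]) F"
  define H4 where "H4 = Psi (rev [(c,b)]) F"
  have rel: "(\<lambda>p. H1 p - s * H2 p) = (\<lambda>p. D1 * H3 p - s * (D2 * H4 p))"
  proof (rule ext)
    fix p
    show "H1 p - s * H2 p = D1 * H3 p - s * (D2 * H4 p)"
      using Rel[OF sw, of a b c d p]
      unfolding H1_def H2_def H3_def H4_def s_def D1_def D2_def by simp
  qed
  have "Psi (rev v) H1 [] - s * Psi (rev v) H2 [] = Psi (rev v) (\<lambda>p. H1 p - s * H2 p) []"
    by (simp add: Psi_diff)
  also have "\<dots> = D1 * Psi (rev v) H3 [] - s * (D2 * Psi (rev v) H4 [])"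
    unfolding rel by (simp add: Psi_diff Psi_smult)
  finally have "Psi (rev v) H1 [] - s * Psi (rev v) H2 [] = D1 * Psi (rev v) H3 [] - s * (D2 * Psi (rev v) H4 [])" .
  then show ?thesis
    unfolding ph H1_def[symmetric] H2_def[symmetric] H3_def[symmetric] H4_def[symmetric] s_def[symmetric]
    unfolding D1_def D2_def by (cases "b = c"; cases "a = d") simp_all
qed

lemma pi_gC: "pi (map (\<lambda>(i,b,j). (Prop i, j)) xs) = prod_list (map (\<lambda>(i,b,j). var i j) xs)"
  by (induct xs) auto

lemma Phi_cap:
  assumes "length is = h" "length js = h" "length bs = h" "distinct bs"
  shows "Phi (capelli_word is js bs) = (\<Prod>k<h. var (is ! k) (js ! k))"
proof -
  define xs where "xs = zip is (zip bs js)"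
  have A: "map (\<lambda>(i, b). (Prop i, Neg b)) (zip is bs) = map (\<lambda>(i,b,j). (Prop i, Neg b)) xs"
    unfolding xs_def by (rule nth_equalityI) (use assms in auto)
  have B: "map (\<lambda>(b,j). (Neg b, j)) (zip bs js) = map (\<lambda>(i,b,j). (Neg b, j)) xs"
    unfolding xs_def by (rule nth_equalityI) (use assms in auto)
  have dist: "distinct (map (\<lambda>(i,b,j). b) xs)"
  proof -
    have "map (\<lambda>(i,b,j). b) xs = bs"
      unfolding xs_def by (rule nth_equalityI) (use assms in auto)
    then show ?thesis using assms by simp
  qed
  have "Phi (capelli_word is js bs)
     = Psi (rev (map (\<lambda>(b, j). (Neg b, Prop j)) (zip bs js))) (Psi (rev (map (\<lambda>(i,b,j). (Prop i, Neg b)) xs)) pi) []"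
    unfolding Phi_def capelli_word_def A by (simp add: Psi_append)
  also have "\<dots> = Psi (rev (map (\<lambda>(i,b,j). (Prop i, Neg b)) xs)) pi ([] @ map (\<lambda>(i,b,j). (Neg b, j)) xs @ [])"
    using capB[of "[]" "zip bs js"] B by simp
  also have "\<dots> = pi ([] @ map (\<lambda>(i,b,j). (Prop i, j)) xs @ [])"
    by (rule capA[OF dist]) auto
  also have "\<dots> = prod_list (map (\<lambda>(i,b,j). var i j) xs)"
    using pi_gC by simp
  also have "\<dots> = (\<Prod>k<h. var (is ! k) (js ! k))"
  proof -
    have "length xs = h" unfolding xs_def using assms by simp
    then show ?thesis
      unfolding prod.list_conv_set_nth
      by (simp add: atLeast0LessThan xs_def assms)
  qed
  finally show ?thesis .
qed



lemma const_add: "const (a + b) = const a + const b" by (simp add: const_def single_add)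
lemma const_mult: "const (a * b) = const a * const b" by (simp add: const_def mult_single)
lemma const_0[simp]: "const 0 = 0" by (simp add: const_def)
lemma const_1[simp]: "const 1 = 1" by (simp add: const_def)
lemma const_uminus: "const (- a) = - const a" by (simp add: const_def single_uminus)
lemma const_pow: "const ((-1) ^ k) = (-1) ^ k"
  by (induct k) (simp_all add: const_mult const_uminus)

definition LF :: "word set \<Rightarrow> free \<Rightarrow> cpoly" where
  "LF S x = (\<Sum>w\<in>S. const (x w) * Phi w)"

lemma LF_add: "LF S (\<lambda>w. x w + y w) = LF S x + LF S y"
  by (simp add: LF_def const_add distrib_right sum.distrib)

lemma LF_smult: "LF S (\<lambda>w. c * x w) = const c * LF S x"
  by (simp add: LF_def const_mult sum_distrib_left mult.assoc)

lemma LF_wmono: "finite S \<Longrightarrow> W \<in> S \<Longrightarrow> LF S (wmono W) = Phi W"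
proof -
  assume "finite S" "W \<in> S"
  have "(\<Sum>w\<in>S. const (wmono W w) * Phi w) = (\<Sum>w\<in>S. if w = W then Phi w else 0)"
    by (rule sum.cong) (auto simp: wmono_def)
  then show ?thesis using \<open>finite S\<close> \<open>W \<in> S\<close> by (simp add: LF_def)
qed

lemma LF_zero: "LF S (\<lambda>w. 0) = 0" by (simp add: LF_def)

definition good :: "free \<Rightarrow> bool" where
  "good x = (\<exists>S. finite S \<and> (\<forall>w. w \<notin> S \<longrightarrow> x w = 0) \<and> (\<forall>S'. finite S' \<longrightarrow> S \<subseteq> S' \<longrightarrow> LF S' x = 0))"

lemma good_irr: "irregular m \<Longrightarrow> good (wmono (u @ m))"
  unfolding good_def
proof (intro exI[of _ "{u @ m}"] conjI allI impI)
  show "finite {u @ m}" by simp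
  fix w assume "w \<notin> {u @ m}" then show "wmono (u @ m) w = 0" by (simp add: wmono_def)
next
  fix S' :: "word set" assume "irregular m" "finite S'" "{u @ m} \<subseteq> S'"
  then show "LF S' (wmono (u @ m)) = 0" by (simp add: LF_wmono Phi_irr)
qed

lemma good_rel: "good (super_rel u g1 g2 v)"
proof -
  obtain a b where g1: "g1 = (a, b)" by force
  obtain c d where g2: "g2 = (c, d)" by force
  define s where "s = (-1::complex) ^ (gp a b * gp c d)"
  define d1 where "d1 = (if b = c then 1 else (0::complex))"
  define d2 where "d2 = (if a = d then 1 else (0::complex))"
  define W1 where "W1 = u @ [(a,b),(c,d)] @ v"
  define W2 where "W2 = u @ [(c,d),(a,b)] @ v"
  define W3 where "W3 = u @ [(a,d)] @ v"
  define W4 where "W4 = u @ [(c,b)] @ v"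
  have eq: "super_rel u g1 g2 v = (\<lambda>w. wmono W1 w + ((- s) * wmono W2 w + ((- d1) * wmono W3 w + (s * d2) * wmono W4 w)))"
    unfolding super_rel_def g1 g2 Let_def s_def d1_def d2_def W1_def W2_def W3_def W4_def gp_def
    by (rule ext) (auto simp: algebra_simps)
  let ?S = "{W1, W2, W3, W4}"
  show ?thesis unfolding good_def
  proof (intro exI[of _ ?S] conjI allI impI)
    show "finite ?S" by simp
    fix w assume "w \<notin> ?S" then show "super_rel u g1 g2 v w = 0" unfolding eq by (simp add: wmono_def)
  next
    fix S' :: "word set" assume f: "finite S'" and sub: "?S \<subseteq> S'"
    have "LF S' (super_rel u g1 g2 v) = Phi W1 + (const (-s) * Phi W2 + (const (- d1) * Phi W3 + const (s * d2) * Phi W4))"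
      unfolding eq LF_add LF_smult using f sub by (simp add: LF_wmono)
    also have "\<dots> = 0"
      using Phi_rel[of u a b c d v] unfolding W1_def[symmetric] W2_def[symmetric] W3_def[symmetric] W4_def[symmetric]
      unfolding s_def d1_def d2_def
      by (cases "b = c"; cases "a = d") (simp_all add: const_uminus const_mult const_pow algebra_simps)
    finally show "LF S' (super_rel u g1 g2 v) = 0" .
  qed
qed

lemma good_span: "x \<in> lin_span (rel_gens n \<union> irr_gens n) \<Longrightarrow> good x"
proof (induct rule: lin_span.induct)
  case zero
  show ?case unfolding good_def by (intro exI[of _ "{}"]) (simp add: LF_zero)
next
  case (step g x c)
  have gg: "good g" using step(1) unfolding rel_gens_def irr_gens_def
    by (auto intro: good_rel good_irr)
  from gg obtain S1 where S1: "finite S1" "\<forall>w. w \<notin> S1 \<longrightarrow> g w = 0" "\<forall>S'. finite S' \<longrightarrow> S1 \<subseteq> S' \<longrightarrow> LF S' g = 0"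
    unfolding good_def by blast
  from step(3) obtain S2 where S2: "finite S2" "\<forall>w. w \<notin> S2 \<longrightarrow> x w = 0" "\<forall>S'. finite S' \<longrightarrow> S2 \<subseteq> S' \<longrightarrow> LF S' x = 0"
    unfolding good_def by blast
  show ?case unfolding good_def
    by (intro exI[of _ "S1 \<union> S2"]) (use S1 S2 in \<open>auto simp: LF_add LF_smult\<close>)
qed

theorem mainTheorem8:
  fixes n h :: nat and "is" js bs :: "nat list" and u :: free
  assumes "h \<ge> 1"
    and "length is = h" and "length js = h" and "length bs = h"
    and "\<forall>i\<in>set is. 1 \<le> i \<and> i \<le> n" and "\<forall>j\<in>set js. 1 \<le> j \<and> j \<le> n"
    and "distinct bs"
    and "in_Ugln n u"
    and "cong_Irr n (wmono (capelli_word is js bs)) u"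
  shows "Koszul n u = (\<Prod>k<h. var (is ! k) (js ! k))"
proof -
  let ?cap = "capelli_word is js bs"
  let ?U = "{w. u w \<noteq> 0}"
  have finU: "finite ?U" using assms(8) by (simp add: in_Ugln_def)
  have "good (\<lambda>w. wmono ?cap w - u w)" using assms(9) good_span unfolding cong_Irr_def by blast
  then obtain S where S: "finite S" "\<forall>S'. finite S' \<longrightarrow> S \<subseteq> S' \<longrightarrow> LF S' (\<lambda>w. wmono ?cap w - u w) = 0"
    unfolding good_def by blast
  let ?S' = "S \<union> {?cap} \<union> ?U"
  have f': "finite ?S'" using S finU by simp
  have z: "LF ?S' (\<lambda>w. wmono ?cap w - u w) = 0" using S(2)[rule_format, OF f'] by blast
  have "(\<lambda>w. wmono ?cap w - u w) = (\<lambda>w. wmono ?cap w + (-1) * u w)" by auto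
  then have "LF ?S' (\<lambda>w. wmono ?cap w + (-1) * u w) = 0" using z by simp
  then have "LF ?S' (wmono ?cap) = LF ?S' u"
    unfolding LF_add LF_smult by (simp add: const_uminus)
  then have e1: "Phi ?cap = LF ?S' u" using f' by (simp add: LF_wmono)
  have "LF ?S' u = (\<Sum>w\<in>?U. const (u w) * Phi w)"
    unfolding LF_def by (rule sum.mono_neutral_right) (use f' in auto)
  also have "\<dots> = (\<Sum>w\<in>?U. const (u w) * K_word n w)"
  proof (rule sum.cong[OF refl])
    fix w assume "w \<in> ?U"
    then have "\<forall>g\<in>set w. okg n g" using assms(8) unfolding in_Ugln_def okg_def by fastforce
    then show "const (u w) * Phi w = const (u w) * K_word n w" by (simp add: Phi_proper)
  qed
  also have "\<dots> = Koszul n u" by (simp add: Koszul_def)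
  finally show ?thesis using e1 Phi_cap[OF assms(2,3,4,7)] by simp
qed


end
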